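(* Let $\lambda$ be Lebesgue measure on $[0,1]$ and let $T:[0,1]\to[0,1]$ be an invertible, ergodic, $\lambda$-preserving transformation which is rigid rank 1, with associated numbers $n_k$ and sets $A_k$ (as in the context). Let $\sigma$ be a self-joining of $([0,1],T,\lambda)$ with disintegration $(\sigma_x)_{x\in[0,1]}$ over the first coordinate. Fix $\epsilon>0$. Say that an index $0\le j<n_k$ is $k$-good if there exists $y_j\in T^jA_k$ such that $$\lambda\big(\{x\in T^jA_k: d_{\mathcal{M}([0,1])}(\sigma_x,\sigma_{y_j})<\epsilon\}\big)\ge(1-\epsilon)\lambda(A_k).$$ Then there exists $k_0$ such that for all $k>k_0$, $$\big|\{0\le j<n_k: j\text{ is }k\text{-good}\}\big|>(1-\epsilon)n_k.$$
   Context: $T$ is called rigid rank 1 if there exist positive integers $n_j$ and measurable sets $A_j\subset[0,1]$ such that: (1) $\lim_{j\to\infty}\lambda\big(\bigcup_{i=0}^{n_j-1}T^iA_j\big)=1$; (2) the sets $A_j,TA_j,\dots,T^{n_j-1}A_j$ are pairwise disjoint; (3) $\lim_{j\to\infty}\lambda(T^{n_j}A_j\cap A_j)/\lambda(A_j)=1$; (4) for every $\varepsilon>0$ there exist, for each $j$, metric balls $B^{(j)}_0,\dots,B^{(j)}_{n_j-1}\subset[0,1]$ of diameter at most $\varepsilon$ such that $\lim_{j\to\infty}\sum_{i=0}^{n_j-1}\lambda(T^iA_j\setminus B^{(j)}_i)=0$. A self-joining of $([0,1],T,\lambda)$ is a $T\times T$-invariant Borel probability measure on $[0,1]\times[0,1]$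 both of whose marginals equal $\lambda$; $\sigma_x$ is regarded as a probability measure on $[0,1]$. $d_{\mathcal{M}([0,1])}$ is the Kantorovich–Rubinstein metric on finite measures on $[0,1]$: $d_{\mathcal{M}([0,1])}(\mu,\nu)=\sup\{|\int f\,d\mu-\int f\,d\nu|: f:[0,1]\to\mathbb{R}\text{ 1-Lipschitz}\}$. *)

theory Defs
  imports "HOL-Probability.Probability"
begin

definition lam :: "real measure" where
  "lam = restrict_space lborel {0..1}"

definition itimg :: "(real \<Rightarrow> real) \<Rightarrow> nat \<Rightarrow> real set \<Rightarrow> real set" where
  "itimg T i A = (T ^^ i) ` A"

definition invertible_mpt :: "(real \<Rightarrow> real) \<Rightarrow> bool" where
  "invertible_mpt T \<longleftrightarrow>
     T \<in> measurable lam lam \<and> bij_betw T {0..1} {0..1} \<and>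
     the_inv_into {0..1} T \<in> measurable lam lam \<and>
     distr lam lam T = lam"

definition ergodic :: "(real \<Rightarrow> real) \<Rightarrow> bool" where
  "ergodic T \<longleftrightarrow> (\<forall>A \<in> sets lam. T -` A \<inter> {0..1} = A \<longrightarrow> measure lam A = 0 \<or> measure lam A = 1)"

definition rigid_rank1_data :: "(real \<Rightarrow> real) \<Rightarrow> (nat \<Rightarrow> nat) \<Rightarrow> (nat \<Rightarrow> real set) \<Rightarrow> bool" where
  "rigid_rank1_data T n A \<longleftrightarrow>
     (\<forall>j. 0 < n j \<and> A j \<in> sets lam) \<and>
     ((\<lambda>j. measure lam (\<Union>i<n j. itimg T i (A j))) \<longlonglongrightarrow> 1) \<and>
     (\<forall>j. disjoint_family_on (\<lambda>i. itimg T i (A j)) {..<n j}) \<and>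
     ((\<lambda>j. measure lam (itimg T (n j) (A j) \<inter> A j) / measure lam (A j)) \<longlonglongrightarrow> 1) \<and>
     (\<forall>\<epsilon>>0. \<exists>c :: nat \<Rightarrow> nat \<Rightarrow> real.
        (\<lambda>j. \<Sum>i<n j. measure lam (itimg T i (A j) - cball (c j i) (\<epsilon>/2))) \<longlonglongrightarrow> 0)"

definition rigid_rank1 :: "(real \<Rightarrow> real) \<Rightarrow> bool" where
  "rigid_rank1 T \<longleftrightarrow> (\<exists>n A. rigid_rank1_data T n A)"

definition self_joining :: "(real \<Rightarrow> real) \<Rightarrow> (real \<times> real) measure \<Rightarrow> bool" where
  "self_joining T \<sigma> \<longleftrightarrow>
     sets \<sigma> = sets (lam \<Otimes>\<^sub>M lam) \<and> prob_space \<sigma> \<and>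
     distr \<sigma> (lam \<Otimes>\<^sub>M lam) (\<lambda>(x,y). (T x, T y)) = \<sigma> \<and>
     distr \<sigma> lam fst = lam \<and> distr \<sigma> lam snd = lam"

definition disintegration :: "(real \<times> real) measure \<Rightarrow> (real \<Rightarrow> real measure) \<Rightarrow> bool" where
  "disintegration \<sigma> \<sigma>x \<longleftrightarrow>
     \<sigma>x \<in> measurable lam (prob_algebra lam) \<and>
     (\<forall>A \<in> sets lam. \<forall>B \<in> sets lam.
        emeasure \<sigma> (A \<times> B) = (\<integral>\<^sup>+ x \<in> A. emeasure (\<sigma>x x) B \<partial>lam))"

definition KR_dist :: "real measure \<Rightarrow> real measure \<Rightarrow> real" where
  "KR_dist \<mu> \<nu> = (SUP f \<in> {f :: real \<Rightarrow> real. 1-lipschitz_on {0..1} f}.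
                     \<bar>(\<integral>x. f x \<partial>\<mu>) - (\<integral>x. f x \<partial>\<nu>)\<bar>)"

definition k_good :: "(real \<Rightarrow> real) \<Rightarrow> (nat \<Rightarrow> real set) \<Rightarrow> (real \<Rightarrow> real measure) \<Rightarrow> real \<Rightarrow> nat \<Rightarrow> nat \<Rightarrow> bool" where
  "k_good T A \<sigma>x \<epsilon> k j \<longleftrightarrow>
     (\<exists>y \<in> itimg T j (A k).
        measure lam {x \<in> itimg T j (A k). KR_dist (\<sigma>x x) (\<sigma>x y) < \<epsilon>} \<ge> (1 - \<epsilon>) * measure lam (A k))"

end

theory Submission imports Defs begin
lemma space_lam[simp]: "space lam = {0..1}"
  by (simp add: lam_def)
lemma sets_lam_iff: "S \<in> sets lam \<longleftrightarrow> S \<subseteq> {0..1} \<and> S \<in> sets borel"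
  unfolding lam_def by (auto simp: sets_restrict_space_iff)
lemma measure_lam: "S \<in> sets lam \<Longrightarrow> measure lam S = measure lborel S"
  unfolding lam_def by (subst measure_restrict_space) (auto simp: sets_lam_iff[unfolded lam_def])
lemma emeasure_lam: "S \<in> sets lam \<Longrightarrow> emeasure lam S = emeasure lborel S"
  unfolding lam_def by (subst emeasure_restrict_space) (auto simp: sets_lam_iff[unfolded lam_def])
lemma prob_lam: "prob_space lam"
proof
  have "emeasure lam (space lam) = emeasure lborel {0..(1::real)}"
    by (subst emeasure_lam) (auto simp: sets_lam_iff)
  then show "emeasure lam (space lam) = 1" by simp
qed
interpretation lamP: prob_space lam by (rule prob_lam)
lemma T_image:
  assumes T: "invertible_mpt T" and B: "B \<in> sets lam"
  shows "T ` B \<in> sets lam" "measure lam (T ` B) = measure lam B"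
proof -
  let ?S = "the_inv_into {0..1} T"
  have bij: "bij_betw T {0..1} {0..1}" and Sm: "?S \<in> measurable lam lam"
    and Tm: "T \<in> measurable lam lam" and d: "distr lam lam T = lam"
    using T unfolding invertible_mpt_def by auto
  have Bs: "B \<subseteq> {0..1}" using B sets_lam_iff by blast
  have inj: "inj_on T {0..1}" using bij bij_betw_def by blast
  have eq: "T ` B = ?S -` B \<inter> {0..1}"
  proof (intro subset_antisym subsetI)
    fix z assume "z \<in> T ` B"
    then obtain x where x: "x \<in> B" "z = T x" by auto
    then have "?S (T x) \<in> B" using Bs the_inv_into_f_f[OF inj] by auto
    moreover have "T x \<in> {0..1}" using x Bs bij bij_betw_imp_surj_on by blast
    ultimately show "z \<in> ?S -` B \<inter> {0..1}" using x by auto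
  next
    fix y assume y: "y \<in> ?S -` B \<inter> {0..1::real}"
    then have "T (?S y) = y" using f_the_inv_into_f_bij_betw[OF bij] by auto
    then show "y \<in> T ` B" using y by force
  qed
  show TB: "T ` B \<in> sets lam"
    unfolding eq using measurable_sets[OF Sm B] by simp
  have "T -` (T ` B) \<inter> {0..1} = B"
    using Bs inj by (auto simp: inj_on_def)
  then have "measure lam B = measure (distr lam lam T) (T ` B)"
    using TB Tm by (subst measure_distr) auto
  then show "measure lam (T ` B) = measure lam B" using d by simp
qed

lemma itimg_props:
  assumes T: "invertible_mpt T" and B: "B \<in> sets lam"
  shows "itimg T i B \<in> sets lam \<and> measure lam (itimg T i B) = measure lam B"
proof (induction i)
  case 0
  then show ?case using B by (simp add: itimg_def)
next
  case (Suc i)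
  have "itimg T (Suc i) B = T ` itimg T i B"
    unfolding itimg_def by (simp add: image_image)
  then show ?case using Suc T_image[OF T] by auto
qed

definition gfun :: "nat \<Rightarrow> int list \<Rightarrow> real \<Rightarrow> real" where
  "gfun m qs x = Min ((\<lambda>i. of_int (qs!i) / real (Suc m) + \<bar>x - real i / real (Suc m)\<bar>) ` {..Suc m})"

definition Qset :: "nat \<Rightarrow> int list set" where
  "Qset m = {qs. length qs = Suc (Suc m) \<and> set qs \<subseteq> {-int (Suc m)..int (Suc m)}}"

lemma Qset_finite: "finite (Qset m)"
proof -
  have "Qset m \<subseteq> {xs. set xs \<subseteq> {-int (Suc m)..int (Suc m)} \<and> length xs = Suc (Suc m)}"
    unfolding Qset_def by auto
  then show ?thesis using finite_lists_length_eq[of "{-int (Suc m)..int (Suc m)}"] finite_subset by blast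
qed

lemma Qset_ne: "Qset m \<noteq> {}"
proof -
  have "replicate (Suc (Suc m)) 0 \<in> Qset m" unfolding Qset_def by auto
  then show ?thesis by blast
qed

lemma gfun_lip1: "gfun m qs x \<le> gfun m qs y + \<bar>x - y\<bar>"
proof -
  let ?t = "\<lambda>z i. of_int (qs!i) / real (Suc m) + \<bar>z - real i / real (Suc m)\<bar>"
  have fin: "finite ((?t y) ` {..Suc m})" "(?t y) ` {..Suc m} \<noteq> {}" by auto
  have "gfun m qs y \<in> (?t y) ` {..Suc m}" unfolding gfun_def using Min_in[OF fin] by simp
  then obtain i where i: "i \<le> Suc m" "gfun m qs y = ?t y i" by auto
  have "gfun m qs x \<le> ?t x i" unfolding gfun_def using i(1) by (intro Min_le) auto
  also have "\<dots> \<le> ?t y i + \<bar>x - y\<bar>" by simp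
  finally show ?thesis using i by simp
qed

lemma gfun_lip: "1-lipschitz_on {0..1} (gfun m qs)"
proof (rule lipschitz_onI)
  fix x y :: real
  show "dist (gfun m qs x) (gfun m qs y) \<le> 1 * dist x y"
    using gfun_lip1[of m qs x y] gfun_lip1[of m qs y x]
    by (simp add: dist_real_def abs_minus_commute)
qed simp

lemma gfun_bound:
  assumes "qs \<in> Qset m" "x \<in> {0..1}"
  shows "\<bar>gfun m qs x\<bar> \<le> 2"
proof -
  let ?t = "\<lambda>z i. of_int (qs!i) / real (Suc m) + \<bar>z - real i / real (Suc m)\<bar>"
  have q: "\<bar>of_int (qs!i)\<bar> \<le> real (Suc m)" if "i \<le> Suc m" for i
  proof -
    have "qs!i \<in> set qs" using assms(1) that unfolding Qset_def by auto
    then have "qs ! i \<in> {-int (Suc m)..int (Suc m)}" using assms(1) unfolding Qset_def by auto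
    then show ?thesis by auto
  qed
  have q2: "\<bar>of_int (qs!i) / real (Suc m)\<bar> \<le> 1" if "i \<le> Suc m" for i
    using q[OF that] by (simp add: divide_le_eq_1 abs_div_pos[symmetric])
  have "gfun m qs x \<le> ?t x 0" unfolding gfun_def by (rule Min_le) (simp, rule image_eqI[where x=0], auto)
  also have "\<dots> \<le> 2"
  proof -
    have a: "of_int (qs!0) / real (Suc m) \<le> 1" using q2[of 0] by (metis abs_le_D1 le0)
    have "\<bar>x - real 0 / real (Suc m)\<bar> \<le> 1" using assms(2) by simp
    with a show ?thesis by linarith
  qed
  finally have up: "gfun m qs x \<le> 2" .
  have "\<forall>i\<le>Suc m. -1 \<le> ?t x i"
  proof safe
    fix i assume "i \<le> Suc m"
    from abs_le_D2[OF q2[OF this]] show "-1 \<le> ?t x i"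
      using abs_ge_zero[of "x - real i / real (Suc m)"] by linarith
  qed
  then have "-1 \<le> gfun m qs x" unfolding gfun_def by (subst Min_ge_iff) auto
  with up show ?thesis by simp
qed

lemma gfun_approx:
  assumes f: "1-lipschitz_on {0..1} f"
  shows "\<exists>qs\<in>Qset m. \<forall>x\<in>{0..1}. \<bar>f x - f 0 - gfun m qs x\<bar> \<le> 2 / real (Suc m)"
proof -
  define M where "M = real (Suc m)"
  have M0: "M \<ge> 1" unfolding M_def by simp
  define r where "r i = real i / M" for i
  have r01: "r i \<in> {0..1}" if "i \<le> Suc m" for i
    using that unfolding r_def M_def by auto
  have fl: "\<bar>f x - f y\<bar> \<le> \<bar>x - y\<bar>" if "x \<in> {0..1}" "y \<in> {0..1}" for x y
    using f that unfolding lipschitz_on_def dist_real_def by auto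
  define qs where "qs = map (\<lambda>i. \<lfloor>(f (r i) - f 0) * M\<rfloor>) [0..<Suc (Suc m)]"
  have qsi: "qs ! i = \<lfloor>(f (r i) - f 0) * M\<rfloor>" if "i \<le> Suc m" for i
    using that unfolding qs_def by (simp del: upt_Suc)
  have qQ: "qs \<in> Qset m"
    unfolding Qset_def
  proof safe
    show "length qs = Suc (Suc m)" unfolding qs_def by simp
  next
    fix z assume "z \<in> set qs"
    then obtain i where i0: "i < length qs" "z = qs ! i" by (metis in_set_conv_nth)
    have lq: "length qs = Suc (Suc m)" unfolding qs_def by simp
    have i: "i \<le> Suc m" "z = qs ! i" using i0 lq by auto
    have "\<bar>f (r i) - f 0\<bar> \<le> 1" using fl[OF r01[OF i(1)], of 0] r01[OF i(1)] by auto
    then have a: "\<bar>(f (r i) - f 0) * M\<bar> \<le> M" using M0 by (simp add: abs_mult mult_le_cancel_right1)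
    have zf: "z = \<lfloor>(f (r i) - f 0) * M\<rfloor>" using i qsi by simp
    have "(f (r i) - f 0) * M \<le> of_int (int (Suc m))" "-of_int (int (Suc m)) \<le> (f (r i) - f 0) * M"
      using a unfolding M_def by (simp_all add: abs_le_iff)
    then have "z \<le> int (Suc m)" "- int (Suc m) \<le> z"
      using zf by (metis floor_mono floor_of_int, metis floor_mono floor_of_int of_int_minus)
    then show "z \<in> {- int (Suc m)..int (Suc m)}" by auto
  qed
  have t_def: "gfun m qs x = Min ((\<lambda>i. of_int (qs!i) / M + \<bar>x - r i\<bar>) ` {..Suc m})" for x
    unfolding gfun_def M_def r_def by simp
  have qlow: "of_int (qs!i) / M \<ge> f (r i) - f 0 - 1 / M" "of_int (qs!i) / M \<le> f (r i) - f 0"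
    if "i \<le> Suc m" for i
  proof -
    define y where "y = (f (r i) - f 0) * M"
    have h: "y - 1 \<le> of_int (qs!i)" "of_int (qs!i) \<le> y"
      using qsi[OF that] unfolding y_def by linarith+
    have e1: "(y - 1) / M \<le> of_int (qs!i) / M" using divide_right_mono[OF h(1)] M0 by simp
    have e2: "of_int (qs!i) / M \<le> y / M" using divide_right_mono[OF h(2)] M0 by simp
    have yM: "y / M = f (r i) - f 0" unfolding y_def using M0 by simp
    have "(y - 1) / M = y / M - 1 / M" by (simp add: diff_divide_distrib)
    then show "of_int (qs!i) / M \<ge> f (r i) - f 0 - 1 / M" "of_int (qs!i) / M \<le> f (r i) - f 0"
      using e1 e2 yM by linarith+
  qed
  show ?thesis
  proof (intro bexI[OF _ qQ] ballI)
    fix x :: real assume x: "x \<in> {0..1}"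
    have "\<forall>i\<le>Suc m. f x - f 0 - 1 / M \<le> of_int (qs!i) / M + \<bar>x - r i\<bar>"
    proof safe
      fix i assume i: "i \<le> Suc m"
      show "f x - f 0 - 1 / M \<le> of_int (qs!i) / M + \<bar>x - r i\<bar>"
        using qlow(1)[OF i] fl[OF x r01[OF i]] by linarith
    qed
    then have lo: "f x - f 0 - 1 / M \<le> gfun m qs x" unfolding t_def by (subst Min_ge_iff) auto
    define j where "j = nat \<lfloor>x * M\<rfloor>"
    have jx: "real j \<le> x * M" "x * M < real j + 1" unfolding j_def using x M0 by auto
    have j: "j \<le> Suc m"
    proof -
      have "x * M \<le> M" using x M0 by auto
      then have "real j \<le> M" using jx by linarith
      then show ?thesis unfolding M_def by simp
    qed
    have "\<bar>x - r j\<bar> \<le> 1 / M"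
    proof -
      have d: "x - r j = (x*M - real j) / M" unfolding r_def using M0 by (simp add: field_simps)
      have "\<bar>x*M - real j\<bar> \<le> 1" using jx by auto
      then have "\<bar>x*M - real j\<bar> / M \<le> 1 / M" using M0 by (intro divide_right_mono) auto
      then show ?thesis unfolding d using M0 by (simp add: abs_divide)
    qed
    then have "of_int (qs!j) / M + \<bar>x - r j\<bar> \<le> f x - f 0 + 2 / M"
      using qlow(2)[OF j] fl[OF x r01[OF j]] by linarith
    moreover have "gfun m qs x \<le> of_int (qs!j) / M + \<bar>x - r j\<bar>"
      unfolding t_def using j by (intro Min_le) auto
    ultimately have "gfun m qs x \<le> f x - f 0 + 2 / M" by linarith
    then show "\<bar>f x - f 0 - gfun m qs x\<bar> \<le> 2 / real (Suc m)"
      using lo M0 unfolding M_def[symmetric] by (simp add: abs_le_iff)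
  qed
qed


lemma meas_on:
  assumes "sets \<mu> = sets lam" "continuous_on {0..1} f"
  shows "f \<in> borel_measurable \<mu>"
proof -
  have "f \<in> borel_measurable (restrict_space borel {0..1})"
    by (rule borel_measurable_continuous_on_restrict[OF assms(2)])
  moreover have "sets (restrict_space borel {0..1::real}) = sets \<mu>"
    using assms(1) unfolding lam_def by (metis sets_lborel sets_restrict_space_cong)
  ultimately show ?thesis by (metis measurable_cong_sets)
qed

lemma int_bound:
  fixes f :: "real \<Rightarrow> real"
  assumes s: "sets \<mu> = sets lam" and p: "prob_space \<mu>" and f: "f \<in> borel_measurable \<mu>"
    and b: "\<And>x. x \<in> {0..1} \<Longrightarrow> \<bar>f x\<bar> \<le> c"
  shows "integrable \<mu> f" "\<bar>\<integral>x. f x \<partial>\<mu>\<bar> \<le> c"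
proof -
  have sp: "space \<mu> = {0..1}" using sets_eq_imp_space_eq[OF s] by simp
  interpret P: prob_space \<mu> by (rule p)
  have ae: "AE x in \<mu>. norm (f x) \<le> c" using b sp by (intro AE_I2) auto
  show i: "integrable \<mu> f" by (rule P.integrable_const_bound[OF ae f])
  have "(\<integral>x. f x \<partial>\<mu>) \<le> c" using b sp by (intro P.integral_le_const[OF i] AE_I2) (auto simp: abs_le_iff)
  moreover have "(\<integral>x. - f x \<partial>\<mu>) \<le> c" using b sp i
    by (intro P.integral_le_const AE_I2) (auto simp: abs_le_iff)
  ultimately show "\<bar>\<integral>x. f x \<partial>\<mu>\<bar> \<le> c" by (simp add: abs_le_iff)
qed

lemma lip_cont: "1-lipschitz_on {0..1} f \<Longrightarrow> continuous_on {0..1} (f :: real \<Rightarrow> real)"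
  by (rule lipschitz_on_continuous_on)

lemma lip_b: "1-lipschitz_on {0..1} (f :: real \<Rightarrow> real) \<Longrightarrow> x \<in> {0..1} \<Longrightarrow> \<bar>f x - f 0\<bar> \<le> (1::real)"
proof -
  assume f: "1-lipschitz_on {0..1} f" and x: "x \<in> {0..1}"
  have "dist (f x) (f 0) \<le> 1 * dist x 0" using lipschitz_onD[OF f x, of 0] by force
  then show ?thesis using x by (simp add: dist_real_def)
qed

lemma int_shift:
  fixes f :: "real \<Rightarrow> real"
  assumes s: "sets \<mu> = sets lam" and p: "prob_space \<mu>" and i: "integrable \<mu> f"
  shows "(\<integral>x. f x - c \<partial>\<mu>) = (\<integral>x. f x \<partial>\<mu>) - (c::real)"
proof -
  interpret P: prob_space \<mu> by (rule p)
  show ?thesis using Bochner_Integration.integral_diff[OF i P.integrable_const[of c]] by (simp add: P.prob_space)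
qed

lemma lip_int:
  fixes f :: "real \<Rightarrow> real"
  assumes s: "sets \<mu> = sets lam" and p: "prob_space \<mu>" and f: "1-lipschitz_on {0..1} f"
  shows "integrable \<mu> f"
proof -
  have "\<bar>f x\<bar> \<le> \<bar>f 0\<bar> + 1" if "x \<in> {0..1}" for x using lip_b[OF f that] by linarith
  then show ?thesis using int_bound[OF s p meas_on[OF s lip_cont[OF f]]] by blast
qed

lemma lip_diff2:
  fixes f :: "real \<Rightarrow> real"
  assumes s: "sets \<mu> = sets lam" and p: "prob_space \<mu>"
    and s': "sets \<nu> = sets lam" and p': "prob_space \<nu>" and f: "1-lipschitz_on {0..1} f"
  shows "\<bar>(\<integral>x. f x \<partial>\<mu>) - (\<integral>x. f x \<partial>\<nu>)\<bar> \<le> 2"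
proof -
  have m: "(\<lambda>x. f x - f 0) \<in> borel_measurable \<mu>" "(\<lambda>x. f x - f 0) \<in> borel_measurable \<nu>"
    using meas_on[OF s lip_cont[OF f]] meas_on[OF s' lip_cont[OF f]] by auto
  have "\<bar>\<integral>x. f x - f 0 \<partial>\<mu>\<bar> \<le> 1" "\<bar>\<integral>x. f x - f 0 \<partial>\<nu>\<bar> \<le> 1"
    using int_bound(2)[OF s p m(1)] int_bound(2)[OF s' p' m(2)] lip_b[OF f] by auto
  then show ?thesis
    using int_shift[OF s p lip_int[OF s p f]] int_shift[OF s' p' lip_int[OF s' p' f]] by simp
qed

lemma lip_approx_int:
  fixes f :: "real \<Rightarrow> real"
  assumes s: "sets \<mu> = sets lam" and p: "prob_space \<mu>"
    and s': "sets \<nu> = sets lam" and p': "prob_space \<nu>" and f: "1-lipschitz_on {0..1} f"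
  shows "\<exists>qs\<in>Qset m. \<bar>(\<integral>x. f x \<partial>\<mu>) - (\<integral>x. f x \<partial>\<nu>)\<bar> \<le> 4 / real (Suc m) +
           \<bar>(\<integral>x. gfun m qs x \<partial>\<mu>) - (\<integral>x. gfun m qs x \<partial>\<nu>)\<bar>"
proof -
  obtain qs where qs: "qs \<in> Qset m" "\<And>x. x\<in>{0..1} \<Longrightarrow> \<bar>f x - f 0 - gfun m qs x\<bar> \<le> 2 / real (Suc m)"
    using gfun_approx[OF f, of m] by blast
  let ?h = "\<lambda>x. f x - f 0 - gfun m qs x"
  have gc: "continuous_on {0..1} (gfun m qs)" by (rule lip_cont[OF gfun_lip])
  have hc: "continuous_on {0..1} ?h" using lip_cont[OF f] gc by (intro continuous_intros) auto
  have ig: "integrable \<mu> (gfun m qs)" "integrable \<nu> (gfun m qs)"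
    using lip_int[OF s p gfun_lip] lip_int[OF s' p' gfun_lip] by auto
  have if1: "integrable \<mu> f" "integrable \<nu> f" using lip_int[OF s p f] lip_int[OF s' p' f] by auto
  have b1: "\<bar>\<integral>x. ?h x \<partial>\<mu>\<bar> \<le> 2 / real (Suc m)" "\<bar>\<integral>x. ?h x \<partial>\<nu>\<bar> \<le> 2 / real (Suc m)"
    using int_bound(2)[OF s p meas_on[OF s hc]] int_bound(2)[OF s' p' meas_on[OF s' hc]] qs(2) by auto
  interpret P1: prob_space \<mu> by (rule p)
  interpret P2: prob_space \<nu> by (rule p')
  have e1: "(\<integral>x. ?h x \<partial>\<mu>) = (\<integral>x. f x \<partial>\<mu>) - f 0 - (\<integral>x. gfun m qs x \<partial>\<mu>)"
    using int_shift[OF s p if1(1)] Bochner_Integration.integral_diff[OF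
       Bochner_Integration.integrable_diff[OF if1(1) P1.integrable_const] ig(1)] by simp
  have e2: "(\<integral>x. ?h x \<partial>\<nu>) = (\<integral>x. f x \<partial>\<nu>) - f 0 - (\<integral>x. gfun m qs x \<partial>\<nu>)"
    using int_shift[OF s' p' if1(2)] Bochner_Integration.integral_diff[OF
       Bochner_Integration.integrable_diff[OF if1(2) P2.integrable_const] ig(2)] by simp
  show ?thesis using b1 e1 e2 qs(1) by (intro bexI[of _ qs]) (auto simp: abs_le_iff)
qed

definition KRmax :: "nat \<Rightarrow> real measure \<Rightarrow> real measure \<Rightarrow> real" where
  "KRmax m \<mu> \<nu> = Max ((\<lambda>qs. \<bar>(\<integral>x. gfun m qs x \<partial>\<mu>) - (\<integral>x. gfun m qs x \<partial>\<nu>)\<bar>) ` Qset m)"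

lemma KR_bounds:
  assumes s: "sets \<mu> = sets lam" and p: "prob_space \<mu>"
    and s': "sets \<nu> = sets lam" and p': "prob_space \<nu>"
  shows "KRmax m \<mu> \<nu> \<le> KR_dist \<mu> \<nu>" "KR_dist \<mu> \<nu> \<le> 4 / real (Suc m) + KRmax m \<mu> \<nu>"
proof -
  let ?F = "{f :: real \<Rightarrow> real. 1-lipschitz_on {0..1} f}"
  let ?D = "\<lambda>f. \<bar>(\<integral>x. f x \<partial>\<mu>) - (\<integral>x. f x \<partial>\<nu>)\<bar>"
  have bdd: "bdd_above (?D ` ?F)"
    using lip_diff2[OF s p s' p'] by (intro bdd_aboveI2[where M=2]) auto
  have "?D (gfun m qs) \<le> KR_dist \<mu> \<nu>" for qs
    unfolding KR_dist_def using gfun_lip by (intro cSUP_upper[OF _ bdd]) auto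
  then show "KRmax m \<mu> \<nu> \<le> KR_dist \<mu> \<nu>"
    unfolding KRmax_def using Qset_finite Qset_ne by (subst Max_le_iff) auto
  have c0: "(\<lambda>x. 0::real) \<in> ?F" by (auto intro!: lipschitz_onI)
  have "?D f \<le> 4 / real (Suc m) + KRmax m \<mu> \<nu>" if "f \<in> ?F" for f
  proof -
    have "1-lipschitz_on {0..1} f" using that by simp
    from lip_approx_int[OF s p s' p' this, of m]
    obtain qs where qs: "qs \<in> Qset m" "?D f \<le> 4 / real (Suc m) + ?D (gfun m qs)" by blast
    have "?D (gfun m qs) \<le> KRmax m \<mu> \<nu>"
      unfolding KRmax_def using Qset_finite qs(1) by (intro Max_ge) auto
    with qs show ?thesis by linarith
  qed
  then show "KR_dist \<mu> \<nu> \<le> 4 / real (Suc m) + KRmax m \<mu> \<nu>"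
    unfolding KR_dist_def using c0 by (intro cSUP_least) auto
qed

lemma KR_lim:
  assumes s: "sets \<mu> = sets lam" and p: "prob_space \<mu>"
    and s': "sets \<nu> = sets lam" and p': "prob_space \<nu>"
  shows "(\<lambda>m. KRmax m \<mu> \<nu>) \<longlonglongrightarrow> KR_dist \<mu> \<nu>"
proof (rule tendsto_sandwich)
  have "(\<lambda>m. 4 * inverse (real (Suc m))) \<longlonglongrightarrow> 0"
    using tendsto_mult_right_zero[OF LIMSEQ_inverse_real_of_nat] by simp
  then have "(\<lambda>m. KR_dist \<mu> \<nu> - 4 * inverse (real (Suc m))) \<longlonglongrightarrow> KR_dist \<mu> \<nu> - 0"
    by (intro tendsto_diff) auto
  then show "(\<lambda>m. KR_dist \<mu> \<nu> - 4 * inverse (real (Suc m))) \<longlonglongrightarrow> KR_dist \<mu> \<nu>" by simp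
  show "\<forall>\<^sub>F m in sequentially. KR_dist \<mu> \<nu> - 4 * inverse (real (Suc m)) \<le> KRmax m \<mu> \<nu>"
    using KR_bounds(2)[OF s p s' p'] by (intro always_eventually allI) (simp add: field_simps)
  show "\<forall>\<^sub>F m in sequentially. KRmax m \<mu> \<nu> \<le> KR_dist \<mu> \<nu>"
    using KR_bounds(1)[OF s p s' p'] by simp
qed simp

lemma kernel_int_meas:
  fixes g :: "real \<Rightarrow> real"
  assumes K: "\<sigma>x \<in> lam \<rightarrow>\<^sub>M prob_algebra lam" and g: "g \<in> borel_measurable lam"
  shows "(\<lambda>x. \<integral>y. g y \<partial>(\<sigma>x x)) \<in> borel_measurable lam"
  using measurable_compose[OF measurable_prob_algebraD[OF K] integral_measurable_subprob_algebra[OF g]] .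

lemma kernel_space:
  assumes K: "\<sigma>x \<in> lam \<rightarrow>\<^sub>M prob_algebra lam" and x: "x \<in> {0..1}"
  shows "sets (\<sigma>x x) = sets lam" "prob_space (\<sigma>x x)"
  using measurable_space[OF K, of x] x by (auto simp: space_prob_algebra)

lemma KR_meas:
  assumes K: "\<sigma>x \<in> lam \<rightarrow>\<^sub>M prob_algebra lam" and s': "sets \<nu> = sets lam" and p': "prob_space \<nu>"
  shows "(\<lambda>x. KR_dist (\<sigma>x x) \<nu>) \<in> borel_measurable lam"
proof (rule borel_measurable_LIMSEQ_real)
  fix x assume "x \<in> space lam"
  then show "(\<lambda>m. KRmax m (\<sigma>x x) \<nu>) \<longlonglongrightarrow> KR_dist (\<sigma>x x) \<nu>"
    using KR_lim[OF kernel_space[OF K] s' p'] by simp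
next
  fix m
  have gm: "gfun m qs \<in> borel_measurable lam" for qs by (rule meas_on[OF refl lip_cont[OF gfun_lip]])
  show "(\<lambda>x. KRmax m (\<sigma>x x) \<nu>) \<in> borel_measurable lam"
    unfolding KRmax_def
    by (intro borel_measurable_Max Qset_finite borel_measurable_abs borel_measurable_diff
        kernel_int_meas[OF K gm] borel_measurable_const)
qed


lemma sets_lam_lebesgue: "S \<in> sets lam \<Longrightarrow> S \<in> sets lebesgue"
  using sets_lam_iff by auto

lemma emeasure_lam_lebesgue: "S \<in> sets lam \<Longrightarrow> emeasure lam S = emeasure lebesgue S"
  using emeasure_lam sets_lam_iff by auto

lemma measure_lam_less:
  assumes "S \<in> sets lam" "emeasure lebesgue S < ennreal d"
  shows "measure lam S < d"
proof -
  have "ennreal (measure lam S) < ennreal d"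
    using assms emeasure_lam_lebesgue lamP.emeasure_eq_measure by metis
  then show ?thesis using ennreal_less_iff by (metis ennreal_less_zero_iff linorder_not_less measure_nonneg
        order_less_le_trans)
qed

lemma weak_lusin:
  fixes \<phi> :: "real \<Rightarrow> real"
  assumes \<phi>m[measurable]: "\<phi> \<in> borel_measurable lam" and b: "\<And>x. x \<in> {0..1} \<Longrightarrow> \<bar>\<phi> x\<bar> \<le> B"
    and \<eta>: "\<eta> > 0" and \<delta>: "\<delta> > 0"
  shows "\<exists>K r. compact K \<and> K \<subseteq> {0..1} \<and> measure lam ({0..1} - K) < \<delta> \<and> r > 0 \<and>
           (\<forall>x\<in>K. \<forall>y\<in>K. dist x y < r \<longrightarrow> \<bar>\<phi> x - \<phi> y\<bar> < \<eta>)"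
proof -
  define h where "h x = \<lfloor>\<phi> x / \<eta>\<rfloor>" for x
  define J where "J = h ` {0..1}"
  have "J \<subseteq> {\<lfloor>-B/\<eta>\<rfloor>..\<lfloor>B/\<eta>\<rfloor>}"
  proof
    fix j assume "j \<in> J"
    then obtain x where x: "x \<in> {0..1}" "j = h x" unfolding J_def by auto
    have "-B \<le> \<phi> x" "\<phi> x \<le> B" using b[OF x(1)] by auto
    then have "-B/\<eta> \<le> \<phi> x / \<eta>" "\<phi> x / \<eta> \<le> B/\<eta>" using \<eta> divide_right_mono[of "-B" "\<phi> x" \<eta>] divide_right_mono[of "\<phi> x" B \<eta>] by auto
    then show "j \<in> {\<lfloor>-B/\<eta>\<rfloor>..\<lfloor>B/\<eta>\<rfloor>}" unfolding x h_def by (auto intro: floor_mono)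
  qed
  then have finJ: "finite J" using finite_subset by blast
  have neJ: "J \<noteq> {}" unfolding J_def by auto
  have cJ: "real (card J) > 0" using finJ neJ by (simp add: card_gt_0_iff)
  define E where "E j = {x\<in>space lam. of_int j \<le> \<phi> x / \<eta> \<and> \<phi> x / \<eta> < of_int j + 1}" for j
  have Eh: "x \<in> E j \<longleftrightarrow> x \<in> {0..1} \<and> h x = j" for x j
    unfolding E_def h_def by (auto simp: floor_eq_iff)
  have Es: "E j \<in> sets lam" for j unfolding E_def by measurable
  have "\<forall>j\<in>J. \<exists>C. closed C \<and> C \<subseteq> E j \<and> emeasure lebesgue (E j - C) < ennreal (\<delta> / card J)"
  proof
    fix j assume "j \<in> J"
    have "\<delta> / card J > 0" using \<delta> cJ by simp
    from sets_lebesgue_inner_closed[OF sets_lam_lebesgue[OF Es] this]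
    show "\<exists>C. closed C \<and> C \<subseteq> E j \<and> emeasure lebesgue (E j - C) < ennreal (\<delta> / card J)" by metis
  qed
  then obtain C where C: "\<And>j. j \<in> J \<Longrightarrow> closed (C j)" "\<And>j. j \<in> J \<Longrightarrow> C j \<subseteq> E j"
     "\<And>j. j \<in> J \<Longrightarrow> emeasure lebesgue (E j - C j) < ennreal (\<delta> / card J)"
    by metis
  have C01: "C j \<subseteq> {0..1}" if "j \<in> J" for j using C(2)[OF that] Eh by auto
  have Ccomp: "compact (C j)" if "j \<in> J" for j
    using C(1)[OF that] C01[OF that] by (meson bounded_closed_interval bounded_subset compact_eq_bounded_closed)
  have EC: "E j - C j \<in> sets lam" if "j \<in> J" for j
    using Es[of j] C(1)[OF that] sets_lam_iff by auto
  have mEC: "measure lam (E j - C j) < \<delta> / card J" if "j \<in> J" for j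
    by (rule measure_lam_less[OF EC[OF that] C(3)[OF that]])
  define K where "K = (\<Union>j\<in>J. C j)"
  have Kc: "compact K" unfolding K_def using finJ Ccomp by auto
  have K01: "K \<subseteq> {0..1}" unfolding K_def using C01 by auto
  have sub: "{0..1} - K \<subseteq> (\<Union>j\<in>J. E j - C j)"
  proof
    fix x assume x: "x \<in> {0..1} - K"
    then have "h x \<in> J" "x \<in> E (h x)" "x \<notin> C (h x)" unfolding J_def K_def using Eh by auto
    then show "x \<in> (\<Union>j\<in>J. E j - C j)" by auto
  qed
  have "measure lam ({0..1} - K) \<le> measure lam (\<Union>j\<in>J. E j - C j)"
    using sub EC finJ by (intro lamP.finite_measure_mono) auto
  also have "\<dots> \<le> (\<Sum>j\<in>J. measure lam (E j - C j))"
    using EC finJ by (intro measure_UNION_le) auto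
  also have "\<dots> < (\<Sum>j\<in>J. \<delta> / card J)"
    using mEC finJ neJ by (intro sum_strict_mono) auto
  also have "\<dots> = \<delta>" using cJ by simp
  finally have mK: "measure lam ({0..1} - K) < \<delta>" .
  define P where "P = {(i,j). i \<in> J \<and> j \<in> J \<and> i \<noteq> j \<and> C i \<noteq> {} \<and> C j \<noteq> {}}"
  have "P \<subseteq> J \<times> J" unfolding P_def by auto
  then have finP: "finite P" using finite_subset finite_cartesian_product[OF finJ finJ] by blast
  define r where "r = Min (insert 1 ((\<lambda>(i,j). setdist (C i) (C j)) ` P))"
  have disj: "C i \<inter> C j = {}" if "i \<in> J" "j \<in> J" "i \<noteq> j" for i j
  proof -
    have "E i \<inter> E j = {}" using Eh that(3) by auto
    then show ?thesis using C(2)[OF that(1)] C(2)[OF that(2)] by blast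
  qed
  have r0: "r > 0" unfolding r_def using finP
  proof (subst Min_gr_iff)
    show "\<forall>a\<in>insert 1 ((\<lambda>(i,j). setdist (C i) (C j)) ` P). 0 < a"
    proof
      fix a assume "a \<in> insert 1 ((\<lambda>(i,j). setdist (C i) (C j)) ` P)"
      then consider "a = 1" | i j where "(i,j) \<in> P" "a = setdist (C i) (C j)" by auto
      then show "0 < a"
      proof cases
        case 2
        then have ij: "i \<in> J" "j \<in> J" "i \<noteq> j" "C i \<noteq> {}" "C j \<noteq> {}" unfolding P_def by auto
        show ?thesis unfolding 2(2) using setdist_gt_0_compact_closed[OF Ccomp[OF ij(1)] C(1)[OF ij(2)]]
          ij disj by auto
      qed simp
    qed
  qed auto
  have close: "\<bar>\<phi> x - \<phi> y\<bar> < \<eta>" if x: "x \<in> K" and y: "y \<in> K" and d: "dist x y < r" for x y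
  proof -
    obtain i j where ij: "i \<in> J" "x \<in> C i" "j \<in> J" "y \<in> C j" using x y unfolding K_def by auto
    have "i = j"
    proof (rule ccontr)
      assume "i \<noteq> j"
      then have "(i,j) \<in> P" unfolding P_def using ij by auto
      then have "r \<le> setdist (C i) (C j)" unfolding r_def using finP by (intro Min_le) auto
      also have "\<dots> \<le> dist x y" using ij by (intro setdist_le_dist) auto
      finally show False using d by simp
    qed
    then have "x \<in> E i" "y \<in> E i" using ij C(2) by auto
    then have "h x = h y" unfolding Eh by simp
    then have "\<bar>\<phi> x / \<eta> - \<phi> y / \<eta>\<bar> < 1" unfolding h_def by linarith
    then have "\<bar>(\<phi> x - \<phi> y) / \<eta>\<bar> < 1" by (simp add: diff_divide_distrib)
    then show ?thesis using \<eta> by (simp add: abs_divide)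
  qed
  show ?thesis using Kc K01 mK r0 close by blast
qed


lemma multi_lusin:
  fixes \<phi> :: "'i \<Rightarrow> real \<Rightarrow> real"
  assumes I: "finite I" "I \<noteq> {}" and m: "\<And>i. i \<in> I \<Longrightarrow> \<phi> i \<in> borel_measurable lam"
    and b: "\<And>i x. i \<in> I \<Longrightarrow> x \<in> {0..1} \<Longrightarrow> \<bar>\<phi> i x\<bar> \<le> B" and \<eta>: "\<eta> > 0" and \<delta>: "\<delta> > 0"
  shows "\<exists>K r. compact K \<and> K \<subseteq> {0..1} \<and> measure lam ({0..1} - K) < \<delta> \<and> r > 0 \<and>
           (\<forall>x\<in>K. \<forall>y\<in>K. dist x y < r \<longrightarrow> (\<forall>i\<in>I. \<bar>\<phi> i x - \<phi> i y\<bar> < \<eta>))"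
proof -
  have cI: "real (card I) > 0" using I by (simp add: card_gt_0_iff)
  have d': "\<delta> / card I > 0" using \<delta> cI by simp
  have "\<forall>i\<in>I. \<exists>K r. compact K \<and> K \<subseteq> {0..1} \<and> measure lam ({0..1} - K) < \<delta> / card I \<and> r > 0 \<and>
           (\<forall>x\<in>K. \<forall>y\<in>K. dist x y < r \<longrightarrow> \<bar>\<phi> i x - \<phi> i y\<bar> < \<eta>)"
    using weak_lusin[OF m b \<eta> d'] by blast
  then obtain K where "\<forall>i\<in>I. \<exists>r. compact (K i) \<and> K i \<subseteq> {0..1} \<and> measure lam ({0..1} - K i) < \<delta> / card I \<and> r > 0 \<and>
           (\<forall>x\<in>K i. \<forall>y\<in>K i. dist x y < r \<longrightarrow> \<bar>\<phi> i x - \<phi> i y\<bar> < \<eta>)"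
    by (metis (no_types, lifting) bchoice)
  then obtain r where "\<forall>i\<in>I. compact (K i) \<and> K i \<subseteq> {0..1} \<and> measure lam ({0..1} - K i) < \<delta> / card I \<and> r i > 0 \<and>
           (\<forall>x\<in>K i. \<forall>y\<in>K i. dist x y < r i \<longrightarrow> \<bar>\<phi> i x - \<phi> i y\<bar> < \<eta>)"
    by (metis (no_types, lifting) bchoice)
  then have K: "\<And>i. i \<in> I \<Longrightarrow> compact (K i)" "\<And>i. i \<in> I \<Longrightarrow> K i \<subseteq> {0..1}"
    "\<And>i. i \<in> I \<Longrightarrow> measure lam ({0..1} - K i) < \<delta> / card I" "\<And>i. i \<in> I \<Longrightarrow> r i > 0"
    "\<And>i x y. i \<in> I \<Longrightarrow> x \<in> K i \<Longrightarrow> y \<in> K i \<Longrightarrow> dist x y < r i \<Longrightarrow> \<bar>\<phi> i x - \<phi> i y\<bar> < \<eta>"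
    by auto
  define KK where "KK = (\<Inter>i\<in>I. K i)"
  have KK01: "KK \<subseteq> {0..1}" unfolding KK_def using K(2) I(2) by blast
  have "closed KK" unfolding KK_def using K(1) compact_imp_closed by blast
  then have KKc: "compact KK" using KK01
    by (meson bounded_closed_interval bounded_subset compact_eq_bounded_closed)
  have Ks: "{0..1} - K i \<in> sets lam" if "i \<in> I" for i
  proof -
    have "closed (K i)" using K(1)[OF that] compact_imp_closed by blast
    then have "K i \<in> sets borel" by auto
    then show ?thesis unfolding sets_lam_iff by auto
  qed
  have eqK: "{0..1} - KK = (\<Union>i\<in>I. {0..1} - K i)" unfolding KK_def by auto
  have "measure lam ({0..1} - KK) \<le> (\<Sum>i\<in>I. measure lam ({0..1} - K i))"
    unfolding eqK using Ks I by (intro measure_UNION_le) auto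
  also have "\<dots> < (\<Sum>i\<in>I. \<delta> / card I)" using K(3) I by (intro sum_strict_mono) auto
  also have "\<dots> = \<delta>" using cI by simp
  finally have mK: "measure lam ({0..1} - KK) < \<delta>" .
  define rr where "rr = Min (r ` I)"
  have rr0: "rr > 0" unfolding rr_def using I K(4) by (subst Min_gr_iff) auto
  have "\<forall>x\<in>KK. \<forall>y\<in>KK. dist x y < rr \<longrightarrow> (\<forall>i\<in>I. \<bar>\<phi> i x - \<phi> i y\<bar> < \<eta>)"
  proof (intro ballI impI)
    fix x y i assume x: "x \<in> KK" and y: "y \<in> KK" and d: "dist x y < rr" and i: "i \<in> I"
    have "rr \<le> r i" unfolding rr_def using I i by (intro Min_le) auto
    then show "\<bar>\<phi> i x - \<phi> i y\<bar> < \<eta>" using K(5)[OF i, of x y] x y d i unfolding KK_def by auto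
  qed
  then show ?thesis using KKc KK01 mK rr0 by blast
qed


theorem mainTheorem5:
  fixes T :: "real \<Rightarrow> real" and n :: "nat \<Rightarrow> nat" and A :: "nat \<Rightarrow> real set"
    and \<sigma> :: "(real \<times> real) measure" and \<sigma>x :: "real \<Rightarrow> real measure" and \<epsilon> :: real
  assumes "invertible_mpt T" and "ergodic T"
    and "rigid_rank1_data T n A"
    and "self_joining T \<sigma>" and "disintegration \<sigma> \<sigma>x"
    and "\<epsilon> > 0"
  shows "\<exists>k0. \<forall>k > k0. real (card {j. j < n k \<and> k_good T A \<sigma>x \<epsilon> k j}) > (1 - \<epsilon>) * real (n k)"
proof -
  note T = assms(1)
  have \<epsilon>: "\<epsilon> > 0" by (rule assms(6))
  have pos: "\<And>j. 0 < n j" and As: "\<And>j. A j \<in> sets lam"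
    and tower: "(\<lambda>j. measure lam (\<Union>i<n j. itimg T i (A j))) \<longlonglongrightarrow> 1"
    and disj: "\<And>j. disjoint_family_on (\<lambda>i. itimg T i (A j)) {..<n j}"
    and small: "\<And>e. e > 0 \<Longrightarrow> \<exists>c :: nat \<Rightarrow> nat \<Rightarrow> real.
        (\<lambda>j. \<Sum>i<n j. measure lam (itimg T i (A j) - cball (c j i) (e/2))) \<longlonglongrightarrow> 0"
    using assms(3) unfolding rigid_rank1_data_def by auto
  have K: "\<sigma>x \<in> lam \<rightarrow>\<^sub>M prob_algebra lam" using assms(5) unfolding disintegration_def by auto
  define m where "m = nat \<lceil>8 / \<epsilon>\<rceil>"
  have "real (Suc m) > 8 / \<epsilon>" unfolding m_def by linarith
  then have "8 < real (Suc m) * \<epsilon>" using \<epsilon> by (simp add: field_simps)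
  then have m4: "4 / real (Suc m) < \<epsilon> / 2" by (simp add: field_simps)
  define \<phi> where "\<phi> qs x = (\<integral>y. gfun m qs y \<partial>(\<sigma>x x))" for qs x
  have \<phi>m: "\<phi> qs \<in> borel_measurable lam" for qs
    unfolding \<phi>_def by (rule kernel_int_meas[OF K meas_on[OF refl lip_cont[OF gfun_lip]]])
  have \<phi>b: "\<bar>\<phi> qs x\<bar> \<le> 2" if "qs \<in> Qset m" "x \<in> {0..1}" for qs x
    unfolding \<phi>_def using int_bound(2)[OF kernel_space[OF K that(2)] meas_on[OF kernel_space(1)[OF K that(2)]
        lip_cont[OF gfun_lip]]] gfun_bound[OF that(1)] by auto
  have \<delta>: "\<epsilon>^2/2 > 0" using \<epsilon> by simp
  have e4: "\<epsilon>/4 > 0" using \<epsilon> by simp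
  obtain Kc r where Kc: "compact Kc" "Kc \<subseteq> {0..1}" "measure lam ({0..1} - Kc) < \<epsilon>^2/2" "r > 0"
    and Kr: "\<And>x y. x \<in> Kc \<Longrightarrow> y \<in> Kc \<Longrightarrow> dist x y < r \<Longrightarrow> (\<forall>qs\<in>Qset m. \<bar>\<phi> qs x - \<phi> qs y\<bar> < \<epsilon>/4)"
    using multi_lusin[of "Qset m" \<phi> 2 "\<epsilon>/4" "\<epsilon>^2/2", OF Qset_finite Qset_ne \<phi>m \<phi>b e4 \<delta>] by blast
  have KRs: "KR_dist (\<sigma>x x) (\<sigma>x y) < \<epsilon>" if x: "x \<in> Kc" and y: "y \<in> Kc" and d: "dist x y < r" for x y
  proof -
    have x1: "x \<in> {0..1}" and y1: "y \<in> {0..1}" using x y Kc(2) by auto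
    have "KRmax m (\<sigma>x x) (\<sigma>x y) < \<epsilon>/4"
      unfolding KRmax_def using Kr[OF x y d] Qset_finite Qset_ne by (subst Max_less_iff) (auto simp: \<phi>_def)
    moreover have "KR_dist (\<sigma>x x) (\<sigma>x y) \<le> 4 / real (Suc m) + KRmax m (\<sigma>x x) (\<sigma>x y)"
      by (rule KR_bounds(2)[OF kernel_space[OF K x1] kernel_space[OF K y1]])
    ultimately show ?thesis using m4 \<epsilon> by linarith
  qed
  have "r/2 > 0" using Kc(4) by simp
  from small[OF this] obtain c :: "nat \<Rightarrow> nat \<Rightarrow> real" where
    c: "(\<lambda>j. \<Sum>i<n j. measure lam (itimg T i (A j) - cball (c j i) (r/2/2))) \<longlonglongrightarrow> 0" by blast
  define s where "s j = (\<Sum>i<n j. measure lam (itimg T i (A j) - cball (c j i) (r/2/2)))" for j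
  have ev1: "eventually (\<lambda>j. s j < \<epsilon>^2/8) sequentially"
    using order_tendstoD(2)[OF c, of "\<epsilon>^2/8"] \<epsilon> unfolding s_def by simp
  have ev2: "eventually (\<lambda>j. 3/4 < measure lam (\<Union>i<n j. itimg T i (A j))) sequentially"
    using order_tendstoD(1)[OF tower, of "3/4"] by simp
  obtain N where N: "\<And>k. k \<ge> N \<Longrightarrow> s k < \<epsilon>^2/8 \<and> 3/4 < measure lam (\<Union>i<n k. itimg T i (A k))"
    using eventually_conj[OF ev1 ev2] unfolding eventually_sequentially by blast
  have L: "itimg T i (A k) \<in> sets lam \<and> measure lam (itimg T i (A k)) = measure lam (A k)" for i k
    by (rule itimg_props[OF T As])
  show ?thesis
  proof (intro exI allI impI)
    fix k assume "k > N"
    then have Nk: "s k < \<epsilon>^2/8" "3/4 < measure lam (\<Union>i<n k. itimg T i (A k))" using N by auto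
    define nn where "nn = n k"
    define a where "a = measure lam (A k)"
    define Li where "Li i = itimg T i (A k)" for i
    have Lis: "Li i \<in> sets lam" and Lim: "measure lam (Li i) = a" for i using L unfolding Li_def a_def by auto
    have Li01: "Li i \<subseteq> {0..1}" for i using Lis sets_lam_iff by blast
    have Li01': "0 \<le> x \<and> x \<le> 1" if "x \<in> Li i" for x i using Li01[of i] that by auto
    have "measure lam (\<Union>i<nn. Li i) = (\<Sum>i<nn. measure lam (Li i))"
      using Lis disj[of k] unfolding Li_def nn_def by (intro measure_finite_Union) auto
    then have tw: "measure lam (\<Union>i<nn. Li i) = real nn * a" using Lim by simp
    have na: "real nn * a > 3/4" using Nk(2) tw unfolding Li_def nn_def by simp
    have a0: "a > 0"
    proof -
      have "a \<ge> 0" unfolding a_def by simp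
      then show ?thesis using na by (cases "a = 0") auto
    qed
    define G where "G i = Li i \<inter> Kc \<inter> cball (c k i) (r/2/2)" for i
    have Gs: "G i \<in> sets lam" for i
    proof -
      have "closed Kc" using Kc(1) compact_imp_closed by blast
      then have "Kc \<inter> cball (c k i) (r/2/2) \<in> sets borel" by auto
      moreover have "Li i \<in> sets borel" using Lis[of i] sets_lam_iff by blast
      ultimately have "Li i \<inter> (Kc \<inter> cball (c k i) (r/2/2)) \<in> sets borel" by (metis sets.Int)
      then show ?thesis unfolding G_def using Li01[of i] sets_lam_iff by (auto simp: Int_assoc)
    qed
    have GL: "G i \<subseteq> Li i" for i unfolding G_def by auto
    have LKs: "Li i - Kc \<in> sets lam" for i
    proof -
      have "closed Kc" using Kc(1) compact_imp_closed by blast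
      then have "Kc \<in> sets borel" by auto
      moreover have "Li i \<in> sets borel" using Lis[of i] sets_lam_iff by blast
      ultimately have "Li i - Kc \<in> sets borel" by (metis sets.Diff)
      then show ?thesis using Li01[of i] sets_lam_iff by auto
    qed
    have good: "k_good T A \<sigma>x \<epsilon> k i" if sm: "measure lam (Li i - G i) \<le> \<epsilon> * a" for i
    proof -
      have mG: "measure lam (G i) \<ge> (1 - \<epsilon>) * a"
        using lamP.finite_measure_Diff[OF Lis Gs GL, of i] Lim sm by (simp add: algebra_simps)
      show ?thesis
      proof (cases "G i = {}")
        case True
        then have "(1 - \<epsilon>) * a \<le> 0" using mG by simp
        have "Li i \<noteq> {}" using Lim[of i] a0 by auto
        then obtain y where y: "y \<in> Li i" by blast
        show ?thesis unfolding k_good_def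
          using y \<open>(1 - \<epsilon>) * a \<le> 0\<close> unfolding Li_def a_def
          by (intro bexI[of _ y]) (auto intro: order_trans[OF _ measure_nonneg])
      next
        case False
        then obtain y where y: "y \<in> G i" by blast
        then have yL: "y \<in> Li i" and y1: "y \<in> {0..1}" using GL Li01 by blast+
        define S where "S = {x \<in> Li i. KR_dist (\<sigma>x x) (\<sigma>x y) < \<epsilon>}"
        have KRm[measurable]: "(\<lambda>x. KR_dist (\<sigma>x x) (\<sigma>x y)) \<in> borel_measurable lam"
          by (rule KR_meas[OF K kernel_space[OF K y1]])
        have "{x \<in> space lam. KR_dist (\<sigma>x x) (\<sigma>x y) < \<epsilon>} \<in> sets lam" by measurable
        moreover have "S = Li i \<inter> {x \<in> space lam. KR_dist (\<sigma>x x) (\<sigma>x y) < \<epsilon>}"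
          unfolding S_def using Li01[of i] by auto
        ultimately have Ss: "S \<in> sets lam" using Lis by auto
        have GS: "G i \<subseteq> S"
        proof
          fix x assume x: "x \<in> G i"
          have "dist x y \<le> dist x (c k i) + dist (c k i) y" by (rule dist_triangle)
          also have "\<dots> \<le> r/2/2 + r/2/2" using x y unfolding G_def by (auto simp: dist_commute)
          finally have "dist x y < r" using Kc(4) by simp
          then show "x \<in> S" unfolding S_def using KRs x y GL unfolding G_def by auto
        qed
        have "measure lam (G i) \<le> measure lam S" using lamP.finite_measure_mono[OF GS Ss] .
        then show ?thesis unfolding k_good_def using mG yL unfolding S_def Li_def a_def
          by (intro bexI[of _ y]) auto
      qed
    qed
    define Bad where "Bad = {i. i < nn \<and> \<not> k_good T A \<sigma>x \<epsilon> k i}"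
    have Bsub: "Bad \<subseteq> {..<nn}" unfolding Bad_def by auto
    have finB: "finite Bad" using Bsub finite_subset by blast
    have bad: "\<epsilon> * a < measure lam (Li i - G i)" if "i \<in> Bad" for i
      using good that unfolding Bad_def by force
    have "real (card Bad) * (\<epsilon> * a) = (\<Sum>i\<in>Bad. \<epsilon> * a)" by simp
    also have "\<dots> \<le> (\<Sum>i\<in>Bad. measure lam (Li i - G i))"
      using bad by (intro sum_mono) (simp add: less_imp_le)
    also have "\<dots> \<le> (\<Sum>i<nn. measure lam (Li i - G i))"
      using Bsub by (intro sum_mono2) auto
    also have "\<dots> \<le> (\<Sum>i<nn. measure lam (Li i - Kc) + measure lam (Li i - cball (c k i) (r/2/2)))"
    proof (intro sum_mono)
      fix i
      have cs: "Li i - Kc \<in> sets lam" "Li i - cball (c k i) (r/2/2) \<in> sets lam"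
      proof -
        have "closed Kc" using Kc(1) compact_imp_closed by blast
        then show "Li i - Kc \<in> sets lam" using Lis[of i] Li01[of i] sets_lam_iff by auto
        show "Li i - cball (c k i) (r/2/2) \<in> sets lam" using Lis[of i] Li01[of i] sets_lam_iff by auto
      qed
      have "measure lam (Li i - G i) \<le> measure lam ((Li i - Kc) \<union> (Li i - cball (c k i) (r/2/2)))"
        using cs by (intro lamP.finite_measure_mono) (auto simp: G_def)
      also have "\<dots> \<le> measure lam (Li i - Kc) + measure lam (Li i - cball (c k i) (r/2/2))"
        using cs by (intro measure_Un_le) auto
      finally show "measure lam (Li i - G i) \<le> measure lam (Li i - Kc) + measure lam (Li i - cball (c k i) (r/2/2))" .
    qed
    also have "\<dots> = (\<Sum>i<nn. measure lam (Li i - Kc)) + s k"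
      unfolding s_def sum.distrib Li_def nn_def by simp
    also have "(\<Sum>i<nn. measure lam (Li i - Kc)) = measure lam (\<Union>i<nn. Li i - Kc)"
    proof -
      have cl: "closed Kc" using Kc(1) compact_imp_closed by blast
      have "disjoint_family_on (\<lambda>i. Li i - Kc) {..<nn}"
        using disj[of k] unfolding disjoint_family_on_def Li_def nn_def by blast
      then show ?thesis using LKs
        by (intro measure_finite_Union[symmetric]) auto
    qed
    also have "measure lam (\<Union>i<nn. Li i - Kc) \<le> measure lam ({0..1} - Kc)"
    proof (rule lamP.finite_measure_mono)
      show "(\<Union>i<nn. Li i - Kc) \<subseteq> {0..1} - Kc" using Li01 by auto
      have "closed Kc" using Kc(1) compact_imp_closed by blast
      then show "{0..1} - Kc \<in> sets lam" using sets_lam_iff by auto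
    qed
    finally have "real (card Bad) * (\<epsilon> * a) < \<epsilon>^2/2 + \<epsilon>^2/8" using Kc(3) Nk(1) by linarith
    also have "\<dots> < \<epsilon>^2 * (3/4)" using \<epsilon> by simp
    also have "\<dots> < \<epsilon>^2 * (real nn * a)" using na \<epsilon> by (intro mult_strict_left_mono) auto
    finally have "real (card Bad) * (\<epsilon> * a) < (\<epsilon> * real nn) * (\<epsilon> * a)" by (simp add: power2_eq_square algebra_simps)
    then have cB: "real (card Bad) < \<epsilon> * real nn" using \<epsilon> a0 by (simp add: mult_less_cancel_right)
    have eqS: "{j. j < n k \<and> k_good T A \<sigma>x \<epsilon> k j} = {..<nn} - Bad" unfolding Bad_def nn_def by auto
    have "card ({..<nn} - Bad) = nn - card Bad" using Bsub finB by (simp add: card_Diff_subset)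
    moreover have "card Bad \<le> nn" using card_mono[OF _ Bsub] by simp
    ultimately have "real (card ({..<nn} - Bad)) = real nn - real (card Bad)" by simp
    then show "real (card {j. j < n k \<and> k_good T A \<sigma>x \<epsilon> k j}) > (1 - \<epsilon>) * real (n k)"
      unfolding eqS using cB unfolding nn_def by (simp add: algebra_simps)
  qed
qed

end
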